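(* Let $(A,B,\mathfrak H)$ be a P-module and let $\xi,\eta\in\mathfrak H$ be vectors contained in rays $p,q$ respectively. If $p\neq q$ then $\xi$ and $\eta$ are orthogonal. In particular, if $\xi\in\mathfrak H$ is contained in a ray $p$, then $p$ is eventually periodic and the length of a period of $p$ is at most $\dim(\mathfrak H)$.
   Context: A P-module is $(A,B,\mathfrak H)$ with $\mathfrak H$ a finite-dimensional complex Hilbert space and $A,B$ operators with $A^*A+B^*B=\mathrm{id}$. A ray is an infinite binary sequence $p=x_1x_2\cdots$; $p_n=x_1\cdots x_n$. For a finite binary word $w=x_1\cdots x_n$ and $\xi\in\mathfrak H$, $w\xi:=X_{x_n}\cdots X_{x_1}\xi$ where $X_0=A$, $X_1=B$. A non-zero vector $\xi$ is contained in the ray $p$ if $\|p_n\xi\|=\|\xi\|$ for all $n\ge1$. A ray $p$ is eventually periodic if $p=v\cdot w^\infty$ for finite words $v,w$ ($w$ a period). *)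

theory Defs
  imports "Jordan_Normal_Form.Matrix"
begin

text \<open>The finite-dimensional complex Hilbert space is modelled as \<open>\<complex>^n\<close> = \<open>carrier_vec n\<close>
  with the standard inner product; operators are \<open>n \<times> n\<close> complex matrices.\<close>

definition hinner :: "complex vec \<Rightarrow> complex vec \<Rightarrow> complex" where
  "hinner v w = (\<Sum>i<dim_vec v. v $ i * cnj (w $ i))"

definition hnorm :: "complex vec \<Rightarrow> real" where
  "hnorm v = sqrt (Re (hinner v v))"

definition adj :: "complex mat \<Rightarrow> complex mat" where
  "adj M = mat (dim_col M) (dim_row M) (\<lambda>(i,j). cnj (M $$ (j,i)))"

definition P_module :: "nat \<Rightarrow> complex mat \<Rightarrow> complex mat \<Rightarrow> bool" where
  "P_module n A B \<longleftrightarrow> A \<in> carrier_mat n n \<and> B \<in> carrier_mat n n \<and>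
     adj A * A + adj B * B = 1\<^sub>m n"

text \<open>A ray is an infinite binary sequence \<open>p :: nat \<Rightarrow> bool\<close>; \<open>p 0\<close> is \<open>x_1\<close>
  (\<open>False\<close> = 0, \<open>True\<close> = 1).\<close>

definition letter_op :: "complex mat \<Rightarrow> complex mat \<Rightarrow> bool \<Rightarrow> complex mat" where
  "letter_op A B x = (if x then B else A)"

text \<open>\<open>w \<xi> = X_{x_n} \<cdots> X_{x_1} \<xi>\<close> for \<open>w = x_1 \<cdots> x_n\<close>.\<close>
definition word_apply :: "complex mat \<Rightarrow> complex mat \<Rightarrow> bool list \<Rightarrow> complex vec \<Rightarrow> complex vec" where
  "word_apply A B w \<xi> = fold (\<lambda>x v. letter_op A B x *\<^sub>v v) w \<xi>"

definition prefix :: "(nat \<Rightarrow> bool) \<Rightarrow> nat \<Rightarrow> bool list" where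
  "prefix p n = map p [0..<n]"

definition contained_in_ray ::
  "nat \<Rightarrow> complex mat \<Rightarrow> complex mat \<Rightarrow> complex vec \<Rightarrow> (nat \<Rightarrow> bool) \<Rightarrow> bool" where
  "contained_in_ray n A B \<xi> p \<longleftrightarrow> \<xi> \<in> carrier_vec n \<and> \<xi> \<noteq> 0\<^sub>v n \<and>
     (\<forall>k\<ge>1. hnorm (word_apply A B (prefix p k) \<xi>) = hnorm \<xi>)"

definition omega_ray :: "bool list \<Rightarrow> bool list \<Rightarrow> nat \<Rightarrow> bool" where
  "omega_ray v w i = (if i < length v then v ! i else w ! ((i - length v) mod length w))"

end

theory Submission
  imports Defs "Jordan_Normal_Form.Determinant"
begin

lemma hinner_self:
  assumes "v \<in> carrier_vec n"
  shows "hinner v v = complex_of_real (\<Sum>i<n. (cmod (v $ i))\<^sup>2)"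
proof -
  have d: "dim_vec v = n" using assms by simp
  show ?thesis unfolding hinner_def of_real_sum d
    by (intro sum.cong refl) (simp only: complex_norm_square)
qed

lemma hinner_self_Re_nonneg:
  assumes "v \<in> carrier_vec n"
  shows "Re (hinner v v) \<ge> 0"
  using hinner_self[OF assms] by (simp add: sum_nonneg)

lemma hinner_self_zero:
  assumes "v \<in> carrier_vec n" and "Re (hinner v v) = 0"
  shows "v = 0\<^sub>v n"
proof -
  have "(\<Sum>i<n. (cmod (v $ i))\<^sup>2) = 0" using assms hinner_self[OF assms(1)] by simp
  then have "\<forall>i\<in>{..<n}. (cmod (v $ i))\<^sup>2 = 0"
    by (subst sum_nonneg_eq_0_iff[symmetric]) auto
  then show ?thesis using assms(1) by (intro eq_vecI) auto
qed

lemma hinner_self_nonzero: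
  assumes "v \<in> carrier_vec n" and "v \<noteq> 0\<^sub>v n"
  shows "hinner v v \<noteq> 0"
  using hinner_self_zero[OF assms(1)] assms(2) by auto

lemma hnorm_zero:
  assumes "v \<in> carrier_vec n" and "hnorm v = 0"
  shows "v = 0\<^sub>v n"
proof -
  have "Re (hinner v v) = 0" using assms(2) hinner_self_Re_nonneg[OF assms(1)]
    unfolding hnorm_def by simp
  then show ?thesis using hinner_self_zero[OF assms(1)] by simp
qed

lemma hinner_zero_left: "hinner (0\<^sub>v n) w = 0"
  unfolding hinner_def by simp

lemma hinner_zero_right: "v \<in> carrier_vec n \<Longrightarrow> hinner v (0\<^sub>v n) = 0"
  unfolding hinner_def by simp

lemma hinner_add_right:
  assumes "v \<in> carrier_vec n" "x \<in> carrier_vec n" "y \<in> carrier_vec n"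
  shows "hinner v (x + y) = hinner v x + hinner v y"
  using assms unfolding hinner_def by (simp add: sum.distrib algebra_simps)

lemma hinner_adj:
  assumes M: "M \<in> carrier_mat n n" and v: "v \<in> carrier_vec n" and u: "u \<in> carrier_vec n"
  shows "hinner (M *\<^sub>v v) u = hinner v (adj M *\<^sub>v u)"
proof -
  have "hinner (M *\<^sub>v v) u = (\<Sum>i<n. (\<Sum>j<n. M $$ (i,j) * v $ j) * cnj (u $ i))"
    using M v u unfolding hinner_def
    by (simp add: scalar_prod_def atLeast0LessThan)
  also have "\<dots> = (\<Sum>i<n. \<Sum>j<n. v $ j * (M $$ (i,j) * cnj (u $ i)))"
    by (intro sum.cong refl) (simp add: sum_distrib_left ring_distribs mult_ac)
  also have "\<dots> = (\<Sum>j<n. \<Sum>i<n. v $ j * (M $$ (i,j) * cnj (u $ i)))"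
    by (rule sum.swap)
  also have "\<dots> = (\<Sum>j<n. v $ j * cnj (\<Sum>i<n. cnj (M $$ (i,j)) * u $ i))"
    by (simp add: sum_distrib_left)
  also have "\<dots> = hinner v (adj M *\<^sub>v u)"
    using M v u unfolding hinner_def adj_def
    by (simp add: scalar_prod_def atLeast0LessThan)
  finally show ?thesis .
qed

lemma pmod_identity:
  assumes P: "P_module n A B" and v: "v \<in> carrier_vec n" and w: "w \<in> carrier_vec n"
  shows "hinner (A *\<^sub>v v) (A *\<^sub>v w) + hinner (B *\<^sub>v v) (B *\<^sub>v w) = hinner v w"
proof -
  have A: "A \<in> carrier_mat n n" and B: "B \<in> carrier_mat n n"
    and I: "adj A * A + adj B * B = 1\<^sub>m n" using P unfolding P_module_def by auto
  have aA: "adj A \<in> carrier_mat n n" using A unfolding adj_def by auto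
  have aB: "adj B \<in> carrier_mat n n" using B unfolding adj_def by auto
  have "hinner (A *\<^sub>v v) (A *\<^sub>v w) + hinner (B *\<^sub>v v) (B *\<^sub>v w)
      = hinner v (adj A *\<^sub>v (A *\<^sub>v w)) + hinner v (adj B *\<^sub>v (B *\<^sub>v w))"
    using A B v w by (simp add: hinner_adj)
  also have "\<dots> = hinner v (adj A *\<^sub>v (A *\<^sub>v w) + adj B *\<^sub>v (B *\<^sub>v w))"
    using A B aA aB v w by (simp add: hinner_add_right)
  also have "adj A *\<^sub>v (A *\<^sub>v w) + adj B *\<^sub>v (B *\<^sub>v w) = (adj A * A + adj B * B) *\<^sub>v w"
  proof -
    have c1: "adj A * A \<in> carrier_mat n n" using aA A by simp
    have c2: "adj B * B \<in> carrier_mat n n" using aB B by simp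
    have "(adj A * A + adj B * B) *\<^sub>v w = (adj A * A) *\<^sub>v w + (adj B * B) *\<^sub>v w"
      by (rule add_mult_distrib_mat_vec[OF c1 c2 w])
    then show ?thesis using A B aA aB w by simp
  qed
  also have "\<dots> = w" using I w by simp
  finally show ?thesis .
qed

lemma letter_carrier:
  "P_module n A B \<Longrightarrow> letter_op A B b \<in> carrier_mat n n"
  unfolding P_module_def letter_op_def by auto

lemma letter_identity:
  assumes P: "P_module n A B" and v: "v \<in> carrier_vec n" and w: "w \<in> carrier_vec n"
  shows "hinner (letter_op A B b *\<^sub>v v) (letter_op A B b *\<^sub>v w)
       + hinner (letter_op A B (\<not> b) *\<^sub>v v) (letter_op A B (\<not> b) *\<^sub>v w) = hinner v w"
  using pmod_identity[OF P v w] by (cases b) (auto simp: letter_op_def add.commute)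

lemma wa_Suc:
  "word_apply A B (prefix p (Suc k)) \<xi> = letter_op A B (p k) *\<^sub>v word_apply A B (prefix p k) \<xi>"
  by (simp add: word_apply_def prefix_def)

lemma wa_carrier:
  assumes P: "P_module n A B" and x: "\<xi> \<in> carrier_vec n"
  shows "word_apply A B w \<xi> \<in> carrier_vec n"
  using x
proof (induction w arbitrary: \<xi>)
  case Nil then show ?case by (simp add: word_apply_def)
next
  case (Cons a w)
  have "letter_op A B a *\<^sub>v \<xi> \<in> carrier_vec n"
    using letter_carrier[OF P, of a] Cons.prems by auto
  then show ?case using Cons.IH by (simp add: word_apply_def)
qed

lemma wa_add:
  "word_apply A B (prefix p (k + j)) \<xi>
   = word_apply A B (prefix (\<lambda>i. p (i + k)) j) (word_apply A B (prefix p k) \<xi>)"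
proof (induction j)
  case 0 then show ?case by (simp add: prefix_def word_apply_def)
next
  case (Suc j)
  then show ?case by (simp add: wa_Suc add.commute)
qed

lemma contained_norm:
  assumes "contained_in_ray n A B \<xi> p"
  shows "hnorm (word_apply A B (prefix p k) \<xi>) = hnorm \<xi>"
  using assms unfolding contained_in_ray_def
  by (cases k) (auto simp: prefix_def word_apply_def)

lemma contained_kill:
  assumes P: "P_module n A B" and c: "contained_in_ray n A B \<xi> p"
  shows "letter_op A B (\<not> p k) *\<^sub>v word_apply A B (prefix p k) \<xi> = 0\<^sub>v n"
proof -
  let ?x = "word_apply A B (prefix p k) \<xi>"
  let ?y = "letter_op A B (p k) *\<^sub>v ?x"
  let ?z = "letter_op A B (\<not> p k) *\<^sub>v ?x"
  have xi: "\<xi> \<in> carrier_vec n" using c unfolding contained_in_ray_def by auto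
  have x: "?x \<in> carrier_vec n" using wa_carrier[OF P xi] .
  have y: "?y \<in> carrier_vec n" using letter_carrier[OF P, of "p k"] x by auto
  have z: "?z \<in> carrier_vec n" using letter_carrier[OF P, of "\<not> p k"] x by auto
  have "hnorm ?y = hnorm ?x"
    using contained_norm[OF c, of "Suc k"] contained_norm[OF c, of k] by (simp add: wa_Suc)
  then have "sqrt (Re (hinner ?y ?y)) = sqrt (Re (hinner ?x ?x))" unfolding hnorm_def .
  then have "Re (hinner ?y ?y) = Re (hinner ?x ?x)" by simp
  moreover have "Re (hinner ?y ?y) + Re (hinner ?z ?z) = Re (hinner ?x ?x)"
    using arg_cong[OF letter_identity[OF P x x, of "p k"], of Re] by simp
  ultimately have "Re (hinner ?z ?z) = 0" by simp
  then show ?thesis using hinner_self_zero[OF z] by simp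
qed

lemma contained_shift:
  assumes P: "P_module n A B" and c: "contained_in_ray n A B \<xi> p"
  shows "contained_in_ray n A B (word_apply A B (prefix p k) \<xi>) (\<lambda>i. p (i + k))"
proof -
  have xi: "\<xi> \<in> carrier_vec n" "\<xi> \<noteq> 0\<^sub>v n" using c unfolding contained_in_ray_def by auto
  have x: "word_apply A B (prefix p k) \<xi> \<in> carrier_vec n" using wa_carrier[OF P xi(1)] .
  have nx: "hnorm (word_apply A B (prefix p k) \<xi>) = hnorm \<xi>" using contained_norm[OF c] .
  have "hnorm \<xi> \<noteq> 0" using hnorm_zero[OF xi(1)] xi(2) by auto
  then have "word_apply A B (prefix p k) \<xi> \<noteq> 0\<^sub>v n"
    using nx by (auto simp: hnorm_def hinner_def)
  moreover have "\<forall>j\<ge>1. hnorm (word_apply A B (prefix (\<lambda>i. p (i + k)) j) (word_apply A B (prefix p k) \<xi>))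
        = hnorm (word_apply A B (prefix p k) \<xi>)"
    using nx contained_norm[OF c] by (simp add: wa_add[symmetric])
  ultimately show ?thesis using x unfolding contained_in_ray_def by auto
qed

lemma ortho:
  assumes P: "P_module n A B" and c1: "contained_in_ray n A B \<xi> p"
    and c2: "contained_in_ray n A B \<eta> q" and pq: "p \<noteq> q"
  shows "hinner \<xi> \<eta> = 0"
proof -
  have xi: "\<xi> \<in> carrier_vec n" using c1 unfolding contained_in_ray_def by auto
  have eta: "\<eta> \<in> carrier_vec n" using c2 unfolding contained_in_ray_def by auto
  have ex: "\<exists>m. p m \<noteq> q m" using pq by auto
  define m where "m = (LEAST m. p m \<noteq> q m)"
  have m: "p m \<noteq> q m" unfolding m_def using LeastI_ex[OF ex] .
  have mless: "p k = q k" if "k < m" for k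
    using not_less_Least[of k "\<lambda>m. p m \<noteq> q m"] that unfolding m_def by blast
  let ?x = "\<lambda>k. word_apply A B (prefix p k) \<xi>"
  let ?y = "\<lambda>k. word_apply A B (prefix q k) \<eta>"
  have xc: "\<And>k. ?x k \<in> carrier_vec n" using wa_carrier[OF P xi] .
  have yc: "\<And>k. ?y k \<in> carrier_vec n" using wa_carrier[OF P eta] .
  have step: "k \<le> m \<Longrightarrow> hinner \<xi> \<eta> = hinner (?x k) (?y k)" for k
  proof (induction k)
    case 0 then show ?case by (simp add: prefix_def word_apply_def)
  next
    case (Suc k)
    then have pk: "q k = p k" using mless by simp
    have "hinner (?x k) (?y k) = hinner (?x (Suc k)) (?y (Suc k))
         + hinner (letter_op A B (\<not> p k) *\<^sub>v ?x k) (letter_op A B (\<not> p k) *\<^sub>v ?y k)"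
      using letter_identity[OF P xc[of k] yc[of k], of "p k"] pk by (simp add: wa_Suc)
    also have "letter_op A B (\<not> p k) *\<^sub>v ?x k = 0\<^sub>v n" using contained_kill[OF P c1] .
    finally have "hinner (?x k) (?y k) = hinner (?x (Suc k)) (?y (Suc k))"
      by (simp add: hinner_zero_left)
    then show ?case using Suc by simp
  qed
  have "hinner (?x m) (?y m) = hinner (letter_op A B (p m) *\<^sub>v ?x m) (letter_op A B (p m) *\<^sub>v ?y m)
         + hinner (letter_op A B (\<not> p m) *\<^sub>v ?x m) (letter_op A B (\<not> p m) *\<^sub>v ?y m)"
    using letter_identity[OF P xc[of m] yc[of m], of "p m"] by simp
  also have "letter_op A B (\<not> p m) *\<^sub>v ?x m = 0\<^sub>v n" using contained_kill[OF P c1] .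
  also have "letter_op A B (p m) *\<^sub>v ?y m = 0\<^sub>v n"
  proof -
    have "(\<not> q m) = p m" using m by auto
    then show ?thesis using contained_kill[OF P c2, of m] by simp
  qed
  finally have "hinner (?x m) (?y m) = 0"
    using letter_carrier[OF P, of "p m"] xc[of m] by (simp add: hinner_zero_left hinner_zero_right)
  then show ?thesis using step[of m] by simp
qed

lemma ortho_bound:
  fixes f :: "nat \<Rightarrow> complex vec"
  assumes fc: "\<And>i. i \<le> n \<Longrightarrow> f i \<in> carrier_vec n"
    and fnz: "\<And>i. i \<le> n \<Longrightarrow> f i \<noteq> 0\<^sub>v n"
    and orth: "\<And>i j. i \<le> n \<Longrightarrow> j \<le> n \<Longrightarrow> i \<noteq> j \<Longrightarrow> hinner (f i) (f j) = 0"
  shows False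
proof -
  define r where "r = (\<lambda>i. vec (Suc n) (\<lambda>j. f j $ i) :: complex vec)"
  define M where "M = mat\<^sub>r (Suc n) (Suc n) (\<lambda>i. if i = n then 0\<^sub>v (Suc n) else r i)"
  have Mc: "M \<in> carrier_mat (Suc n) (Suc n)" unfolding M_def by auto
  have "det M = 0" unfolding M_def
    by (rule det_row_0) (auto simp: r_def)
  then obtain c where c: "c \<in> carrier_vec (Suc n)" "c \<noteq> 0\<^sub>v (Suc n)" "M *\<^sub>v c = 0\<^sub>v (Suc n)"
    using det_0_iff_vec_prod_zero[OF Mc] by auto
  have rowz: "(\<Sum>j<Suc n. f j $ i * c $ j) = 0" if i: "i < n" for i
  proof -
    have "(M *\<^sub>v c) $ i = 0" using c(3) i by simp
    moreover have "(M *\<^sub>v c) $ i = (\<Sum>j<Suc n. f j $ i * c $ j)"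
      using i c(1) unfolding M_def r_def
      by (simp add: scalar_prod_def atLeast0LessThan)
    ultimately show ?thesis by simp
  qed
  have dimf: "dim_vec (f j) = n" if "j < Suc n" for j using fc[of j] that by auto
  have ck: "c $ k = 0" if k: "k \<le> n" for k
  proof -
    have "(\<Sum>j<Suc n. c $ j * hinner (f j) (f k)) = (\<Sum>j<Suc n. if j = k then c $ k * hinner (f k) (f k) else 0)"
      by (rule sum.cong) (use orth k in auto)
    also have "\<dots> = c $ k * hinner (f k) (f k)" using k by simp
    finally have e1: "(\<Sum>j<Suc n. c $ j * hinner (f j) (f k)) = c $ k * hinner (f k) (f k)" .
    have "(\<Sum>j<Suc n. c $ j * hinner (f j) (f k)) = (\<Sum>j<Suc n. \<Sum>i<n. c $ j * (f j $ i * cnj (f k $ i)))"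
      unfolding hinner_def by (intro sum.cong refl) (auto simp: dimf sum_distrib_left)
    also have "\<dots> = (\<Sum>i<n. \<Sum>j<Suc n. c $ j * (f j $ i * cnj (f k $ i)))"
      by (rule sum.swap)
    also have "\<dots> = (\<Sum>i<n. (\<Sum>j<Suc n. f j $ i * c $ j) * cnj (f k $ i))"
      by (intro sum.cong refl) (simp add: sum_distrib_left ring_distribs mult_ac)
    also have "\<dots> = 0" using rowz by simp
    finally have "c $ k * hinner (f k) (f k) = 0" using e1 by simp
    then show ?thesis using hinner_self_nonzero[OF fc[OF k] fnz[OF k]] by simp
  qed
  have "c = 0\<^sub>v (Suc n)" using c(1) ck by (intro eq_vecI) auto
  then show False using c(2) by simp
qed

lemma periodic_mod:
  fixes i j t :: nat
  assumes e: "\<And>t. p (t + i) = p (t + j)" and ij: "i < j"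
  shows "p (i + t) = p (i + t mod (j - i))"
proof (induction t rule: less_induct)
  case (less t)
  show ?case
  proof (cases "t < j - i")
    case True then show ?thesis by simp
  next
    case False
    then have t: "t = (t - (j - i)) + (j - i)" by simp
    have "p (i + t) = p ((t - (j - i)) + j)" using False ij by (simp add: algebra_simps)
    also have "\<dots> = p ((t - (j - i)) + i)" using e by simp
    also have "\<dots> = p (i + (t - (j - i)) mod (j - i))" using less[of "t - (j - i)"] False ij
      by (simp add: add.commute)
    also have "(t - (j - i)) mod (j - i) = t mod (j - i)"
      using False by (simp add: mod_if)
    finally show ?thesis .
  qed
qed

theorem lemma2p9:
  fixes n :: nat and A B :: "complex mat"
  assumes "P_module n A B"
  shows "(\<forall>\<xi> \<eta> p q. contained_in_ray n A B \<xi> p \<and> contained_in_ray n A B \<eta> q \<and> p \<noteq> q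
            \<longrightarrow> hinner \<xi> \<eta> = 0)
       \<and> (\<forall>\<xi> p. contained_in_ray n A B \<xi> p \<longrightarrow>
            (\<exists>v w. w \<noteq> [] \<and> length w \<le> n \<and> p = omega_ray v w))"
proof (intro conjI allI impI)
  fix \<xi> \<eta> p q
  assume "contained_in_ray n A B \<xi> p \<and> contained_in_ray n A B \<eta> q \<and> p \<noteq> q"
  then show "hinner \<xi> \<eta> = 0" using ortho[OF assms] by blast
next
  fix \<xi> p
  assume c: "contained_in_ray n A B \<xi> p"
  have xi: "\<xi> \<in> carrier_vec n" using c unfolding contained_in_ray_def by auto
  let ?s = "\<lambda>k i. p (i + k)"
  let ?f = "\<lambda>k. word_apply A B (prefix p k) \<xi>"
  have "\<exists>i j. i < j \<and> j \<le> n \<and> ?s i = ?s j"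
  proof (rule ccontr)
    assume nex: "\<not> ?thesis"
    have cs: "\<And>k. contained_in_ray n A B (?f k) (?s k)" using contained_shift[OF assms c] .
    show False
    proof (rule ortho_bound[of n ?f])
      fix i assume "i \<le> n"
      show "?f i \<in> carrier_vec n" using wa_carrier[OF assms xi] .
      show "?f i \<noteq> 0\<^sub>v n" using cs[of i] unfolding contained_in_ray_def by auto
    next
      fix i j assume ij: "i \<le> n" "j \<le> n" "i \<noteq> j"
      have "?s i \<noteq> ?s j"
      proof (cases "i < j")
        case True then show ?thesis using nex ij by blast
      next
        case False then have "j < i" using ij by simp
        then show ?thesis using nex ij by metis
      qed
      then show "hinner (?f i) (?f j) = 0" using ortho[OF assms cs cs] by blast
    qed
  qed
  then obtain i j where ij: "i < j" "j \<le> n" and e: "?s i = ?s j" by blast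
  have e': "\<And>t. p (t + i) = p (t + j)" using e by metis
  show "\<exists>v w. w \<noteq> [] \<and> length w \<le> n \<and> p = omega_ray v w"
  proof (intro exI conjI)
    show "map p [i..<j] \<noteq> []" using ij by simp
    show "length (map p [i..<j]) \<le> n" using ij by simp
    show "p = omega_ray (prefix p i) (map p [i..<j])"
    proof
      fix t
      show "p t = omega_ray (prefix p i) (map p [i..<j]) t"
      proof (cases "t < i")
        case True then show ?thesis by (simp add: omega_ray_def prefix_def)
      next
        case False
        have "(t - i) mod (j - i) < j - i" using ij by simp
        then have "map p [i..<j] ! ((t - i) mod (j - i)) = p (i + (t - i) mod (j - i))"
          by simp
        also have "\<dots> = p (i + (t - i))" using periodic_mod[OF e' ij(1), of "t - i"] by simp
        also have "\<dots> = p t" using False by simp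
        finally show ?thesis using False by (simp add: omega_ray_def prefix_def)
      qed
    qed
  qed
qed

end
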